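(* Let $R$ be a commutative ring, $M$ an $R$-module, and $a\in M^{{\mathbb N}}$ an $R$-recurrence sequence of order $d$. If $a(k)=a(k+m)=a(k+2m)=\cdots=a(k+(d-1)m)=0$ for some $k\in{\mathbb N}$ and some positive integer $m$, then $a(k+im)=0$ for all $i\in{\mathbb N}$.
   Context: ${\mathbb N}=\{0,1,2,\dots\}$. $a\in M^{{\mathbb N}}$ is an $R$-recurrence sequence of order $d$ if $d$ is the smallest integer $\ge0$ for which there are $\gamma_0,\dots,\gamma_{d-1}\in R$ with $a(n+d)=\gamma_{d-1}a(n+d-1)+\cdots+\gamma_0a(n)$ for all $n\in{\mathbb N}$. *)

theory Defs
  imports Main "HOL.Modules"
begin

definition satisfies_rec_of_length ::
  "('r::comm_ring_1 \<Rightarrow> 'm::ab_group_add \<Rightarrow> 'm) \<Rightarrow> (nat \<Rightarrow> 'm) \<Rightarrow> nat \<Rightarrow> bool" where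
  "satisfies_rec_of_length scale a d \<longleftrightarrow>
     (\<exists>\<gamma> :: nat \<Rightarrow> 'r. \<forall>n. a (n + d) = (\<Sum>i<d. scale (\<gamma> i) (a (n + i))))"

definition is_recurrence_of_order ::
  "('r::comm_ring_1 \<Rightarrow> 'm::ab_group_add \<Rightarrow> 'm) \<Rightarrow> (nat \<Rightarrow> 'm) \<Rightarrow> nat \<Rightarrow> bool" where
  "is_recurrence_of_order scale a d \<longleftrightarrow>
     satisfies_rec_of_length scale a d \<and> (\<forall>e<d. \<not> satisfies_rec_of_length scale a e)"

end

theory Submission imports Defs "Jordan_Normal_Form.Char_Poly" begin


definition actm :: "('a::comm_ring_1 \<Rightarrow> 'b::ab_group_add \<Rightarrow> 'b) \<Rightarrow> nat \<Rightarrow> 'a poly \<Rightarrow> (nat \<Rightarrow> 'b) \<Rightarrow> nat \<Rightarrow> 'b" where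
  "actm scale m p b n = (\<Sum>i<Suc (degree p). scale (coeff p i) (b (n + i*m)))"

lemma (in Modules.module) actm_bound:
  fixes p :: "'a poly"
  assumes "degree p < N"
  shows "actm scale m p b n = (\<Sum>i<N. scale (coeff p i) (b (n + i*m)))"
  unfolding actm_def
proof (rule sum.mono_neutral_left)
  show "\<forall>i\<in>{..<N} - {..<Suc (degree p)}. scale (coeff p i) (b (n + i * m)) = 0"
    by (auto simp: coeff_eq_0)
qed (use assms in auto)

lemma (in Modules.module) actm_add:
  fixes p q :: "'a poly"
  shows "actm scale m (p + q) b n = actm scale m p b n + actm scale m q b n"
proof -
  define N where "N = Suc (max (degree p) (degree q))"
  have "degree (p+q) < N" unfolding N_def using degree_add_le_max[of p q] by linarith
  then show ?thesis
    by (subst (1 2 3) actm_bound[where N=N]) (auto simp: N_def scale_left_distrib sum.distrib)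
qed

lemma (in Modules.module) actm_zero[simp]: "actm scale m 0 b n = 0"
  by (simp add: actm_def)

lemma (in Modules.module) actm_pCons: "actm scale m (pCons c p) b n = scale c (b n) + actm scale m p b (n + m)"
proof -
  have "degree (pCons c p) < Suc (Suc (degree p))" using degree_pCons_le[of c p] by linarith
  then have "actm scale m (pCons c p) b n = (\<Sum>i<Suc (Suc (degree p)). scale (coeff (pCons c p) i) (b (n + i*m)))"
    by (rule actm_bound)
  also have "\<dots> = scale c (b n) + (\<Sum>i<Suc (degree p). scale (coeff p i) (b (n + m + i*m)))"
    by (subst sum.lessThan_Suc_shift) (simp add: add.assoc)
  also have "\<dots> = scale c (b n) + actm scale m p b (n + m)" by (simp add: actm_def)
  finally show ?thesis .
qed

lemma (in Modules.module) actm_smult: "actm scale m (Polynomial.smult c p) b n = scale c (actm scale m p b n)"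
proof -
  have "degree (Polynomial.smult c p) < Suc (degree p)" using degree_smult_le[of c p] by linarith
  then have "actm scale m (Polynomial.smult c p) b n = (\<Sum>i<Suc (degree p). scale (coeff (Polynomial.smult c p) i) (b (n + i*m)))"
    by (rule actm_bound)
  also have "\<dots> = (\<Sum>i<Suc (degree p). scale c (scale (coeff p i) (b (n + i*m))))"
    by (rule sum.cong) (simp_all add: scale_scale)
  also have "\<dots> = scale c (actm scale m p b n)"
    by (simp only: actm_def scale_sum_right)
  finally show ?thesis .
qed

lemma (in Modules.module) actm_mult: "actm scale m (p * q) b n = actm scale m p (\<lambda>n'. actm scale m q b n') n"
proof (induction p arbitrary: n rule: pCons_induct)
  case (pCons c p)
  show ?case
    by (simp add: mult_pCons_left actm_add actm_smult actm_pCons pCons.IH)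
qed simp

lemma (in Modules.module) actm_const: "actm scale m [:c:] b n = scale c (b n)"
  by (simp add: actm_pCons)

lemma (in Modules.module) actm_X: "actm scale m [:0,1:] b n = b (n + m)"
  by (simp add: actm_pCons)

lemma (in Modules.module) actm_sum_fun: "actm scale m p (\<lambda>n'. \<Sum>j\<in>J. f j n') n = (\<Sum>j\<in>J. actm scale m p (f j) n)"
  unfolding actm_def by (simp add: scale_sum_right sum.swap[of _ J])

lemma (in Modules.module) actm_zero_fun: "actm scale m p (\<lambda>_. 0) n = 0"
  unfolding actm_def by simp

lemma (in Modules.module) actm_sum_poly: "actm scale m (\<Sum>j\<in>J. f j) b n = (\<Sum>j\<in>J. actm scale m (f j) b n)"
  by (induction J rule: infinite_finite_induct) (auto simp: actm_add)

lemma (in Modules.module) rep: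
  fixes a :: "nat \<Rightarrow> 'b" and t d :: nat
  assumes rec: "\<forall>n. a (n + d) = (\<Sum>i<d. scale (\<gamma> i) (a (n + i)))"
  shows "\<exists>c. \<forall>n. a (n + t) = (\<Sum>l<d. scale (c l) (a (n + l)))"
proof (induction t rule: less_induct)
  case (less t)
  show ?case
  proof (cases "t < d")
    case True
    have "\<forall>n. a (n + t) = (\<Sum>l<d. scale (if l = t then 1 else 0) (a (n + l)))"
    proof
      fix n
      have "(\<Sum>l<d. scale (if l = t then 1 else 0) (a (n + l))) = (\<Sum>l<d. if l = t then a (n + l) else 0)"
        by (rule sum.cong) auto
      then show "a (n + t) = (\<Sum>l<d. scale (if l = t then 1 else 0) (a (n + l)))" using True by simp
    qed
    then show ?thesis by (rule exI[where x="\<lambda>l. if l = t then 1 else 0"])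
  next
    case False
    have "\<forall>i\<in>{..<d}. \<exists>c. \<forall>n. a (n + (t - d + i)) = (\<Sum>l<d. scale (c l) (a (n + l)))"
      using False by (intro ballI less) auto
    then obtain C where C: "\<And>i n. i < d \<Longrightarrow> a (n + (t - d + i)) = (\<Sum>l<d. scale (C i l) (a (n + l)))"
      by (metis bchoice lessThan_iff)
    have "a (n + t) = (\<Sum>l<d. scale (\<Sum>i<d. \<gamma> i * C i l) (a (n + l)))" for n
    proof -
      have "a (n + t) = a ((n + t - d) + d)" using False by simp
      also have "\<dots> = (\<Sum>i<d. scale (\<gamma> i) (a (n + t - d + i)))" using rec by simp
      also have "\<dots> = (\<Sum>i<d. scale (\<gamma> i) (\<Sum>l<d. scale (C i l) (a (n + l))))"
        apply (rule sum.cong[OF refl])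
        using C False by (metis Nat.add_diff_assoc add.assoc lessThan_iff not_less)
      also have "\<dots> = (\<Sum>i<d. \<Sum>l<d. scale (\<gamma> i * C i l) (a (n + l)))"
        by (simp only: scale_sum_right scale_scale)
      also have "\<dots> = (\<Sum>l<d. \<Sum>i<d. scale (\<gamma> i * C i l) (a (n + l)))"
        by (rule sum.swap)
      also have "\<dots> = (\<Sum>l<d. scale (\<Sum>i<d. \<gamma> i * C i l) (a (n + l)))"
        by (simp only: scale_sum_left)
      finally show ?thesis .
    qed
    then show ?thesis by (intro exI[where x="\<lambda>l. \<Sum>i<d. \<gamma> i * C i l"] allI)
  qed
qed


hide_const (open) Module.module

theorem corollary2p2:
  fixes scale :: "'r::comm_ring_1 \<Rightarrow> 'm::ab_group_add \<Rightarrow> 'm"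
    and a :: "nat \<Rightarrow> 'm" and d k m :: nat
  assumes "module scale"
    and "is_recurrence_of_order scale a d"
    and "m > 0"
    and "\<forall>j<d. a (k + j * m) = 0"
  shows "\<forall>i. a (k + i * m) = 0"
proof -
  interpret M: Modules.module scale by fact
  from assms(2) obtain \<gamma> where rec: "\<forall>n. a (n + d) = (\<Sum>i<d. scale (\<gamma> i) (a (n + i)))"
    unfolding is_recurrence_of_order_def satisfies_rec_of_length_def by blast
  show ?thesis
  proof (cases "d = 0")
    case True
    then show ?thesis using rec by simp
  next
    case False
    have "\<forall>t. \<exists>c. \<forall>n. a (n + t) = (\<Sum>l<d. scale (c l) (a (n + l)))"
      using M.rep[OF rec] by blast
    then obtain c where c: "\<And>t n. a (n + t) = (\<Sum>l<d. scale (c t l) (a (n + l)))"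
      by metis
    define A where "A = mat d d (\<lambda>(j,l). c (j+m) l)"
    define B where "B = char_poly_matrix A"
    define Q where "Q = char_poly A"
    have A: "A \<in> carrier_mat d d" by (simp add: A_def)
    have B: "B \<in> carrier_mat d d" using A by (simp add: B_def)
    have Bij: "B $$ (j,l) = (if j = l then [:0,1:] else 0) + [: - c (j+m) l :]"
      if "j < d" "l < d" for j l
      using A that by (simp add: B_def char_poly_matrix_def A_def)
    have key1: "(\<Sum>l<d. actm scale m (B $$ (j,l)) (\<lambda>n'. a (n'+l)) n) = 0" if j: "j < d" for j n
    proof -
      have "(\<Sum>l<d. actm scale m (B $$ (j,l)) (\<lambda>n'. a (n'+l)) n)
          = (\<Sum>l<d. (if j = l then a (n + m + l) else 0) + scale (- c (j+m) l) (a (n+l)))"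
      proof (rule sum.cong)
        fix l assume "l \<in> {..<d}"
        then show "actm scale m (B $$ (j,l)) (\<lambda>n'. a (n'+l)) n
          = (if j = l then a (n + m + l) else 0) + scale (- c (j+m) l) (a (n+l))"
          using j by (simp add: Bij M.actm_add M.actm_X M.actm_const)
      qed simp
      also have "\<dots> = a (n + m + j) - (\<Sum>l<d. scale (c (j+m) l) (a (n+l)))"
        using j by (simp add: sum_subtractf M.scale_minus_left)
      also have "\<dots> = a (n + (j + m)) - (\<Sum>l<d. scale (c (j+m) l) (a (n+l)))"
        by (simp add: add.commute add.left_commute)
      also have "\<dots> = 0" using c[of n "j+m"] by simp
      finally show ?thesis .
    qed
    have adj: "adj_mat B * B = det B \<cdot>\<^sub>m 1\<^sub>m d" using adj_mat(3)[OF B] .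
    have entry: "(\<Sum>j<d. adj_mat B $$ (0,j) * B $$ (j,l)) = (if l = 0 then Q else 0)"
      if l: "l < d" for l
    proof -
      have "(adj_mat B * B) $$ (0,l) = (\<Sum>j<d. adj_mat B $$ (0,j) * B $$ (j,l))"
        using adj_mat(1)[OF B] B l False
        by (simp add: scalar_prod_def lessThan_atLeast0)
      moreover have "(adj_mat B * B) $$ (0,l) = (if l = 0 then Q else 0)"
        unfolding adj using l False by (simp add: Q_def B_def char_poly_def)
      ultimately show ?thesis by simp
    qed
    have actQ: "actm scale m Q a n = 0" for n
    proof -
      have "actm scale m Q a n = (\<Sum>l<d. actm scale m (if l = 0 then Q else 0) (\<lambda>n'. a (n'+l)) n)"
      proof -
        have "(\<Sum>l<d. actm scale m (if l = 0 then Q else 0) (\<lambda>n'. a (n'+l)) n)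
            = (\<Sum>l<d. if l = 0 then actm scale m Q a n else 0)"
          by (rule sum.cong) auto
        also have "\<dots> = actm scale m Q a n" using False by simp
        finally show ?thesis by simp
      qed
      also have "\<dots> = (\<Sum>l<d. \<Sum>j<d. actm scale m (adj_mat B $$ (0,j))
                          (actm scale m (B $$ (j,l)) (\<lambda>n'. a (n'+l))) n)"
        by (rule sum.cong) (simp_all add: entry[symmetric] M.actm_sum_poly M.actm_mult)
      also have "\<dots> = (\<Sum>j<d. \<Sum>l<d. actm scale m (adj_mat B $$ (0,j))
                          (actm scale m (B $$ (j,l)) (\<lambda>n'. a (n'+l))) n)"
        by (rule sum.swap)
      also have "\<dots> = (\<Sum>j<d. actm scale m (adj_mat B $$ (0,j))
                          (\<lambda>n''. \<Sum>l<d. actm scale m (B $$ (j,l)) (\<lambda>n'. a (n'+l)) n'') n)"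
        by (simp only: M.actm_sum_fun)
      also have "\<dots> = (\<Sum>j<d. actm scale m (adj_mat B $$ (0,j)) (\<lambda>_. 0) n)"
        by (rule sum.cong) (simp_all add: key1)
      also have "\<dots> = 0" by (simp add: M.actm_zero_fun)
      finally show ?thesis .
    qed
    have degQ: "degree Q = d" and lcQ: "coeff Q d = 1"
      using degree_monic_char_poly[OF A] by (simp_all add: Q_def)
    have rec2: "a (n + d*m) = - (\<Sum>i<d. scale (coeff Q i) (a (n + i*m)))" for n
    proof -
      have "0 = (\<Sum>i<Suc d. scale (coeff Q i) (a (n + i*m)))"
        using actQ[of n] by (simp add: actm_def degQ del: sum.lessThan_Suc)
      also have "\<dots> = (\<Sum>i<d. scale (coeff Q i) (a (n + i*m))) + a (n + d*m)"
        by (simp add: lcQ)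
      finally show ?thesis by (simp add: eq_neg_iff_add_eq_0 add.commute)
    qed
    show ?thesis
    proof
      fix i
      show "a (k + i * m) = 0"
      proof (induction i rule: less_induct)
        case (less i)
        show ?case
        proof (cases "i < d")
          case True
          then show ?thesis using assms(4) by blast
        next
          case False
          have "a (k + i * m) = a ((k + (i - d) * m) + d * m)"
            using False by (simp add: add.assoc add_mult_distrib[symmetric])
          also have "\<dots> = - (\<Sum>j<d. scale (coeff Q j) (a (k + (i - d) * m + j*m)))"
            by (rule rec2)
          also have "\<dots> = 0"
          proof -
            have "a (k + (i - d) * m + j*m) = 0" if "j < d" for j
            proof -
              have "k + (i - d) * m + j*m = k + (i - d + j) * m" by (simp add: add_mult_distrib add.assoc)
              moreover have "i - d + j < i" using that False by linarith
              ultimately show ?thesis using less by metis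
            qed
            then show ?thesis by simp
          qed
          finally show ?thesis .
        qed
      qed
    qed
  qed
qed

end
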